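(* Let $A$ be a binary matrix and let $U$ and $V$ be two distinct bases of $A$. Then at most one of $U$, $V$ spans the other; this holds both in the binary setting and in the boolean setting.
   Context: A set $X$ of $\{0,1\}$-vectors spans a vector $y$ in the binary (resp. boolean) sense if $y=\sum_{x\in X}c_xx$ with $c_x\in\{0,1\}$ using ordinary (resp. boolean, $1+1=1$) addition; $X$ spans a set $Y$ if it spans each vector of $Y$. A binary (resp. boolean) base of an $n\times m$ binary matrix $A$ is a set of $\{0,1\}$ column vectors of length $n$ spanning every column of $A$ in the corresponding sense, of minimum cardinality among such spanning sets. *)

theory Defs
  imports Main
begin

definition zo_vec :: "nat \<Rightarrow> (nat \<Rightarrow> nat) \<Rightarrow> bool" where
  "zo_vec n v \<longleftrightarrow> (\<forall>i<n. v i \<in> {0,1}) \<and> (\<forall>i. n \<le> i \<longrightarrow> v i = 0)"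

definition binary_matrix :: "nat \<Rightarrow> nat \<Rightarrow> (nat \<Rightarrow> nat \<Rightarrow> nat) \<Rightarrow> bool" where
  "binary_matrix n m A \<longleftrightarrow> (\<forall>i<n. \<forall>j<m. A i j \<in> {0,1})"

definition col :: "nat \<Rightarrow> (nat \<Rightarrow> nat \<Rightarrow> nat) \<Rightarrow> nat \<Rightarrow> (nat \<Rightarrow> nat)" where
  "col n A j = (\<lambda>i. if i < n then A i j else 0)"

definition cols :: "nat \<Rightarrow> nat \<Rightarrow> (nat \<Rightarrow> nat \<Rightarrow> nat) \<Rightarrow> (nat \<Rightarrow> nat) set" where
  "cols n m A = {col n A j | j. j < m}"

text \<open>Binary span: y is the ordinary (integer) sum of a subfamily of X.\<close>
definition bin_spans :: "(nat \<Rightarrow> nat) set \<Rightarrow> (nat \<Rightarrow> nat) \<Rightarrow> bool" where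
  "bin_spans X y \<longleftrightarrow> (\<exists>S\<subseteq>X. y = (\<lambda>i. \<Sum>x\<in>S. x i))"

definition bool_spans :: "(nat \<Rightarrow> nat) set \<Rightarrow> (nat \<Rightarrow> nat) \<Rightarrow> bool" where
  "bool_spans X y \<longleftrightarrow> (\<exists>S\<subseteq>X. y = (\<lambda>i. if \<exists>x\<in>S. x i = 1 then 1 else 0))"

definition spans_set ::
  "((nat \<Rightarrow> nat) set \<Rightarrow> (nat \<Rightarrow> nat) \<Rightarrow> bool) \<Rightarrow> (nat \<Rightarrow> nat) set \<Rightarrow> (nat \<Rightarrow> nat) set \<Rightarrow> bool" where
  "spans_set sp X Y \<longleftrightarrow> (\<forall>y\<in>Y. sp X y)"

definition is_base ::
  "((nat \<Rightarrow> nat) set \<Rightarrow> (nat \<Rightarrow> nat) \<Rightarrow> bool) \<Rightarrow> nat \<Rightarrow> nat \<Rightarrow> (nat \<Rightarrow> nat \<Rightarrow> nat)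
     \<Rightarrow> (nat \<Rightarrow> nat) set \<Rightarrow> bool" where
  "is_base sp n m A U \<longleftrightarrow>
     (\<forall>u\<in>U. zo_vec n u) \<and> spans_set sp U (cols n m A) \<and>
     (\<forall>W. (\<forall>w\<in>W. zo_vec n w) \<and> spans_set sp W (cols n m A) \<longrightarrow> card U \<le> card W)"

end

theory Submission
  imports Defs
begin

lemma zo_finite: "finite {v. zo_vec n v}"
proof -
  have "{v. zo_vec n v} \<subseteq> {f. \<forall>x. (x \<in> {..<n} \<longrightarrow> f x \<in> {0,1::nat}) \<and> (x \<notin> {..<n} \<longrightarrow> f x = 0)}"
    by (auto simp: zo_vec_def)
  moreover have "finite {f. \<forall>x. (x \<in> {..<n} \<longrightarrow> f x \<in> {0,1::nat}) \<and> (x \<notin> {..<n} \<longrightarrow> f x = 0)}"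
    by (rule finite_set_of_finite_funs) auto
  ultimately show ?thesis by (rule finite_subset)
qed

lemma base_finite: "is_base sp n m A U \<Longrightarrow> finite U"
  unfolding is_base_def using zo_finite by (metis mem_Collect_eq rev_finite_subset subsetI)

lemma zo_01: "zo_vec n v \<Longrightarrow> v i \<in> {0,1}"
  unfolding zo_vec_def by (cases "i < n") auto

lemma exists_u:
  assumes "is_base sp n m A U" "is_base sp n m A V" "U \<noteq> V"
  shows "\<exists>u\<in>U. u \<notin> V"
proof (rule ccontr)
  assume "\<not> ?thesis"
  hence sub: "U \<subseteq> V" by blast
  have "card V \<le> card U" using assms(1,2) unfolding is_base_def by blast
  moreover have "finite V" using base_finite assms(2) by blast
  ultimately have "U = V" using sub by (metis card_subset_eq antisym card_mono)
  thus False using assms(3) by simp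
qed

lemma base_min_contra:
  assumes "is_base sp n m A U" "u \<in> U" "spans_set sp (U - {u}) (cols n m A)"
  shows False
proof -
  have "finite U" using base_finite assms(1) by blast
  have "card U \<le> card (U - {u})" using assms unfolding is_base_def by blast
  moreover have "card (U - {u}) < card U" using \<open>finite U\<close> assms(2) by (meson card_Diff1_less)
  ultimately show False by simp
qed

lemma two_le_sum:
  fixes f :: "'a \<Rightarrow> nat"
  assumes "finite S" "x\<in>S" "y\<in>S" "x\<noteq>y" shows "f x + f y \<le> sum f S"
proof -
  have "sum f S = f x + sum f (S-{x})" using sum.remove assms by metis
  moreover have "f y \<le> sum f (S-{x})" by (rule member_le_sum) (use assms in auto)
  ultimately show ?thesis by simp
qed

lemma col_le1: "binary_matrix n m A \<Longrightarrow> j < m \<Longrightarrow> col n A j i \<le> 1"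
  unfolding binary_matrix_def col_def by fastforce

lemma bin_part:
  assumes bm: "binary_matrix n m A" and bU: "is_base bin_spans n m A U"
    and bV: "is_base bin_spans n m A V" and UV: "spans_set bin_spans U V"
    and VU: "spans_set bin_spans V U" and neq: "U \<noteq> V"
  shows False
proof -
  have finU: "finite U" and finV: "finite V" using base_finite bU bV by blast+
  obtain u where uU: "u \<in> U" and uV: "u \<notin> V" using exists_u[OF bU bV neq] by blast
  have uzo: "zo_vec n u" using bU uU unfolding is_base_def by blast
  have u1: "\<And>i. u i \<le> 1" using zo_01[OF uzo] by (metis insert_iff le_less less_one singletonD zero_le_one)
  obtain S where SV: "S \<subseteq> V" and uS: "u = (\<lambda>i. \<Sum>x\<in>S. x i)"
    using VU uU unfolding spans_set_def bin_spans_def by blast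
  have finS: "finite S" using SV finV finite_subset by blast
  obtain T where T: "\<forall>v\<in>V. T v \<subseteq> U \<and> v = (\<lambda>i. \<Sum>x\<in>T v. x i)"
    using UV unfolding spans_set_def bin_spans_def by metis
  define T' where "T' v = T v - {(\<lambda>i. 0::nat)}" for v
  have T'U: "\<And>v. v \<in> V \<Longrightarrow> T' v \<subseteq> U" using T unfolding T'_def by blast
  have finT': "\<And>v. v \<in> V \<Longrightarrow> finite (T' v)" using finite_subset[OF T'U finU] by blast
  have T'sum: "\<And>v i. v \<in> V \<Longrightarrow> v i = (\<Sum>x\<in>T' v. x i)"
  proof -
    fix v i assume vV: "v \<in> V"
    have "finite (T v)" using T vV finU finite_subset by blast
    have "v i = (\<Sum>x\<in>T v. x i)" using T vV by metis
    also have "\<dots> = (\<Sum>x\<in>T' v. x i)" unfolding T'_def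
      using sum_diff1_nat[of "\<lambda>x. x i" "T v" "(\<lambda>i. 0::nat)"] by simp
    finally show "v i = (\<Sum>x\<in>T' v. x i)" .
  qed
  have T'nz: "\<And>v w. w \<in> T' v \<Longrightarrow> \<exists>i. w i \<noteq> 0" unfolding T'_def by auto
  have a: "\<And>v i. v \<in> S \<Longrightarrow> v i \<le> u i"
    using uS finS by (auto intro: member_le_sum)
  have b: "\<And>v w i. v \<in> V \<Longrightarrow> w \<in> T' v \<Longrightarrow> w i \<le> v i"
  proof -
    fix v w i assume vV: "v \<in> V" and w: "w \<in> T' v"
    have "w i \<le> (\<Sum>x\<in>T' v. x i)" by (rule member_le_sum) (use w finT'[OF vV] in auto)
    thus "w i \<le> v i" using T'sum[OF vV] by simp
  qed
  define R where "R = (\<Union>v\<in>S. T' v)"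
  have RU: "R \<subseteq> U - {u}"
  proof
    fix w assume "w \<in> R"
    then obtain v where vS: "v \<in> S" and w: "w \<in> T' v" unfolding R_def by blast
    have "w \<in> U" using T'U vS SV w by blast
    moreover have "w \<noteq> u"
    proof
      assume "w = u"
      have vV: "v \<in> V" using vS SV by blast
      have "\<And>i. u i = v i"
      proof -
        fix i show "u i = v i" using a[OF vS, of i] b[OF vV w, of i] \<open>w = u\<close> by simp
      qed
      hence "u = v" by blast
      thus False using uV vS SV by blast
    qed
    ultimately show "w \<in> U - {u}" by blast
  qed
  have finR: "finite R" using RU finU finite_subset by blast
  have Rle: "\<And>r i. r \<in> R \<Longrightarrow> r i \<le> u i"
  proof -
    fix r i assume "r \<in> R"
    then obtain v where vS: "v \<in> S" and w: "r \<in> T' v" unfolding R_def by blast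
    have vV: "v \<in> V" using vS SV by blast
    show "r i \<le> u i" using a[OF vS, of i] b[OF vV w, of i] by simp
  qed
  have disj: "\<forall>v1\<in>S. \<forall>v2\<in>S. v1 \<noteq> v2 \<longrightarrow> T' v1 \<inter> T' v2 = {}"
  proof (intro ballI impI)
    fix v1 v2 assume v1: "v1 \<in> S" and v2: "v2 \<in> S" and ne: "v1 \<noteq> v2"
    show "T' v1 \<inter> T' v2 = {}"
    proof (rule ccontr)
      assume "T' v1 \<inter> T' v2 \<noteq> {}"
      then obtain w where w1: "w \<in> T' v1" and w2: "w \<in> T' v2" by blast
      obtain i where wi: "w i \<noteq> 0" using T'nz w1 by blast
      have "v1 i + v2 i \<le> u i" using two_le_sum[OF finS v1 v2 ne, of "\<lambda>x. x i"] uS by simp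
      moreover have "w i \<le> v1 i" "w i \<le> v2 i" using b v1 v2 SV w1 w2 by blast+
      ultimately show False using u1[of i] wi by linarith
    qed
  qed
  have uR: "\<And>i. u i = (\<Sum>r\<in>R. r i)"
  proof -
    fix i
    have "(\<Sum>r\<in>R. r i) = (\<Sum>v\<in>S. \<Sum>r\<in>T' v. r i)"
      unfolding R_def by (rule sum.UNION_disjoint) (use finS finT' SV disj in auto)
    also have "\<dots> = (\<Sum>v\<in>S. v i)" by (rule sum.cong) (use T'sum SV in auto)
    finally show "u i = (\<Sum>r\<in>R. r i)" using uS by simp
  qed
  have Rnz: "\<And>r. r \<in> R \<Longrightarrow> \<exists>i. r i \<noteq> 0" unfolding R_def using T'nz by blast
  have "spans_set bin_spans (U - {u}) (cols n m A)"
    unfolding spans_set_def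
  proof
    fix c assume "c \<in> cols n m A"
    then obtain j where j: "j < m" and c: "c = col n A j" unfolding cols_def by blast
    have c1: "\<And>i. c i \<le> 1" using col_le1[OF bm j] c by simp
    obtain Sc where ScU: "Sc \<subseteq> U" and cS: "c = (\<lambda>i. \<Sum>x\<in>Sc. x i)"
      using bU \<open>c \<in> cols n m A\<close> unfolding is_base_def spans_set_def bin_spans_def by blast
    have finSc: "finite Sc" using ScU finU finite_subset by blast
    show "bin_spans (U - {u}) c"
    proof (cases "u \<in> Sc")
      case False
      thus ?thesis unfolding bin_spans_def using ScU cS by blast
    next
      case True
      have dj: "(Sc - {u}) \<inter> R = {}"
      proof (rule ccontr)
        assume "(Sc - {u}) \<inter> R \<noteq> {}"
        then obtain r where r1: "r \<in> Sc" "r \<noteq> u" and r2: "r \<in> R" by blast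
        obtain i where ri: "r i \<noteq> 0" using Rnz r2 by blast
        have "r i + u i \<le> c i" using two_le_sum[OF finSc r1(1) True r1(2), of "\<lambda>x. x i"] cS by simp
        moreover have "r i \<le> u i" using Rle r2 by blast
        ultimately show False using c1[of i] ri by linarith
      qed
      have "c = (\<lambda>i. \<Sum>x\<in>(Sc - {u}) \<union> R. x i)"
      proof
        fix i
        have "(\<Sum>x\<in>(Sc - {u}) \<union> R. x i) = (\<Sum>x\<in>Sc - {u}. x i) + (\<Sum>x\<in>R. x i)"
          by (rule sum.union_disjoint) (use finSc finR dj in auto)
        also have "\<dots> = (\<Sum>x\<in>Sc - {u}. x i) + u i" using uR by simp
        also have "\<dots> = (\<Sum>x\<in>Sc. x i)" using sum.remove[OF finSc True, of "\<lambda>x. x i"] by simp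
        finally show "c i = (\<Sum>x\<in>(Sc - {u}) \<union> R. x i)" using cS by simp
      qed
      moreover have "(Sc - {u}) \<union> R \<subseteq> U - {u}" using ScU RU by blast
      ultimately show ?thesis unfolding bin_spans_def by blast
    qed
  qed
  thus False using base_min_contra[OF bU uU] by blast
qed

lemma bool_part:
  assumes bU: "is_base bool_spans n m A U"
    and bV: "is_base bool_spans n m A V" and UV: "spans_set bool_spans U V"
    and VU: "spans_set bool_spans V U" and neq: "U \<noteq> V"
  shows False
proof -
  obtain u where uU: "u \<in> U" and uV: "u \<notin> V" using exists_u[OF bU bV neq] by blast
  have uzo: "zo_vec n u" using bU uU unfolding is_base_def by blast
  obtain S where SV: "S \<subseteq> V" and uS: "u = (\<lambda>i. if \<exists>x\<in>S. x i = 1 then 1 else 0)"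
    using VU uU unfolding spans_set_def bool_spans_def by blast
  obtain T where T: "\<forall>v\<in>V. T v \<subseteq> U \<and> v = (\<lambda>i. if \<exists>x\<in>T v. x i = 1 then 1 else 0)"
    using UV unfolding spans_set_def bool_spans_def by metis
  define R where "R = (\<Union>v\<in>S. T v)"
  have RU: "R \<subseteq> U - {u}"
  proof
    fix w assume "w \<in> R"
    then obtain v where vS: "v \<in> S" and w: "w \<in> T v" unfolding R_def by blast
    have vV: "v \<in> V" using vS SV by blast
    have vzo: "zo_vec n v" using bV vV unfolding is_base_def by blast
    have "w \<in> U" using T vV w by blast
    moreover have "w \<noteq> u"
    proof
      assume wu: "w = u"
      have "\<And>i. u i = v i"
      proof -
        fix i
        have v_eq: "v i = (if \<exists>x\<in>T v. x i = 1 then 1 else 0)" using T vV by metis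
        have uT: "u \<in> T v" using w wu by simp
        have l: "u i = 1 \<Longrightarrow> v i = 1" using v_eq uT by auto
        have r: "v i = 1 \<Longrightarrow> u i = 1"
        proof -
          assume "v i = 1" hence "\<exists>x\<in>S. x i = 1" using vS by blast
          thus "u i = 1" by (subst uS) simp
        qed
        have "u i = 1 \<longleftrightarrow> v i = 1" using l r by blast
        thus "u i = v i" using zo_01[OF uzo, of i] zo_01[OF vzo, of i] by auto
      qed
      hence "u = v" by blast
      thus False using uV vV by blast
    qed
    ultimately show "w \<in> U - {u}" by blast
  qed
  have uR: "\<And>i. (\<exists>x\<in>R. x i = 1) \<longleftrightarrow> u i = 1"
  proof -
    fix i
    have "(\<exists>x\<in>R. x i = 1) \<longleftrightarrow> (\<exists>v\<in>S. \<exists>x\<in>T v. x i = 1)" unfolding R_def by blast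
    also have "\<dots> \<longleftrightarrow> (\<exists>v\<in>S. v i = 1)"
    proof -
      have "\<And>v. v \<in> S \<Longrightarrow> v i = 1 \<longleftrightarrow> (\<exists>x\<in>T v. x i = 1)"
      proof -
        fix v assume "v \<in> S"
        hence "v i = (if \<exists>x\<in>T v. x i = 1 then 1 else 0)" using T SV by (metis subsetD)
        thus "v i = 1 \<longleftrightarrow> (\<exists>x\<in>T v. x i = 1)" by simp
      qed
      thus ?thesis by blast
    qed
    also have "\<dots> \<longleftrightarrow> u i = 1" using uS by simp
    finally show "(\<exists>x\<in>R. x i = 1) \<longleftrightarrow> u i = 1" .
  qed
  have "spans_set bool_spans (U - {u}) (cols n m A)"
    unfolding spans_set_def
  proof
    fix c assume "c \<in> cols n m A"
    obtain Sc where ScU: "Sc \<subseteq> U" and cS: "c = (\<lambda>i. if \<exists>x\<in>Sc. x i = 1 then 1 else 0)"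
      using bU \<open>c \<in> cols n m A\<close> unfolding is_base_def spans_set_def bool_spans_def by blast
    show "bool_spans (U - {u}) c"
    proof (cases "u \<in> Sc")
      case False
      thus ?thesis unfolding bool_spans_def using ScU cS by blast
    next
      case True
      have "c = (\<lambda>i. if \<exists>x\<in>(Sc - {u}) \<union> R. x i = 1 then 1 else 0)"
      proof
        fix i
        have "(\<exists>x\<in>(Sc - {u}) \<union> R. x i = 1) \<longleftrightarrow> (\<exists>x\<in>Sc. x i = 1)"
          using uR[of i] True by blast
        thus "c i = (if \<exists>x\<in>(Sc - {u}) \<union> R. x i = 1 then 1 else 0)" using cS by simp
      qed
      moreover have "(Sc - {u}) \<union> R \<subseteq> U - {u}" using ScU RU by blast
      ultimately show ?thesis unfolding bool_spans_def by blast
    qed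
  qed
  thus False using base_min_contra[OF bU uU] by blast
qed

theorem mainTheorem18:
  fixes n m :: nat and A :: "nat \<Rightarrow> nat \<Rightarrow> nat" and U V :: "(nat \<Rightarrow> nat) set"
  assumes "binary_matrix n m A" and "U \<noteq> V"
  shows "(is_base bin_spans n m A U \<and> is_base bin_spans n m A V \<longrightarrow>
            \<not> (spans_set bin_spans U V \<and> spans_set bin_spans V U))
       \<and> (is_base bool_spans n m A U \<and> is_base bool_spans n m A V \<longrightarrow>
            \<not> (spans_set bool_spans U V \<and> spans_set bool_spans V U))"
  using bin_part[OF assms(1) _ _ _ _ assms(2)] bool_part[OF _ _ _ _ assms(2)] by blast

end
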